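(* Let $k\ge1$. The data are $(R_0,\Sigma_0)$, with $R_0$ a random $k\times2$ matrix, $vec(R_0)\sim N(a_\Delta\otimes\mu,\Sigma_0)$, $a_\Delta=(\Delta,1)'$, and $\Sigma_0$ a known positive definite $2k\times2k$ matrix. With $e_1=(1,0)'$, $e_2=(0,1)'$, let $C=[(e_1'\otimes I_k)\Sigma_0(e_1\otimes I_k)]^{-1/2}$, $M=(e_2'\otimes I_k)\Sigma_0^{-1}(e_2\otimes I_k)$, $D=M^{1/2}$, $S=C(e_1'\otimes I_k)vec(R_0)$, $T=M^{-1/2}(e_2'\otimes I_k)\Sigma_0^{-1}vec(R_0)$, and define $$AR=S'S,\qquad LM=S'N_{CD^{-1}T}S,$$ $$LR=\sup_{\Delta\in\mathbb{R}}vec(R_0)'\Sigma_0^{-1/2}N_{\Sigma_0^{-1/2}(a_\Delta\otimes I_k)}\Sigma_0^{-1/2}vec(R_0)-T'T,$$ $$QLR=\frac{AR-T'T+\sqrt{(AR-T'T)^2+4\,LM\cdot T'T}}{2}.$$ Then $AR$, $LM$, $LR$ and $QLR$ are invariant under the action of $g=(g_1,g_2)\in\mathcal{G}_L(k)\times\mathcal{G}_T(2)$ given by $g\circ(R_0,\Sigma_0)=(g_1R_0g_2',\ (g_2\otimes g_1)\Sigma_0(g_2'\otimes g_1'))$; that is, each statistic takes the same value at $g\circ(R_0,\Sigma_0)$ as at $(R_0,\Sigma_0)$.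
   Context: $N_A=A(A'A)^{-1}A'$ for a matrix (or vector) $A$ of full column rank. Matrix square roots are symmetric positive definite. $\mathcal{G}_L(k)$: invertible $k\times k$ matrices; $\mathcal{G}_T(2)$: invertible lower-triangular $2\times2$ matrices. In the IV model, $R_0=RB_0$ and $\Sigma_0=(B_0'\otimes I_k)\Sigma(B_0\otimes I_k)$ for $B_0=\begin{pmatrix}1&0\\-\beta_0&1\end{pmatrix}$ and $\Delta=\beta-\beta_0$; the statistics above are the Anderson–Rubin, score, likelihood ratio and quasi-likelihood ratio statistics for $H_0:\beta=\beta_0$. *)

theory Defs
  imports "HOL-Analysis.Analysis" "HOL-Library.Numeral_Type"
begin

text \<open>Matrices are HOL-Analysis matrices real^'c^'r (r rows, c columns).
  The dimension k is the finite index type 'k. Vectors of length 2k are indexed by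
  2 \<times> 'k, the pair (a,i) standing for entry i of block a; this is the ordering of vec.\<close>

definition pos_def :: "real^'n^'n \<Rightarrow> bool" where
  "pos_def A \<longleftrightarrow> transpose A = A \<and> (\<forall>x. x \<noteq> 0 \<longrightarrow> x \<bullet> (A *v x) > 0)"

definition msqrt :: "real^'n^'n \<Rightarrow> real^'n^'n" where
  "msqrt A = (THE S. pos_def S \<and> S ** S = A)"

definition vecm :: "real^2^'k \<Rightarrow> real^(2 \<times> 'k)" where
  "vecm R = (\<chi> p. R $ snd p $ fst p)"

definition kron :: "real^'b^'a \<Rightarrow> real^'d^'c \<Rightarrow> real^('b \<times> 'd)^('a \<times> 'c)" where
  "kron A B = (\<chi> p q. A $ fst p $ fst q * B $ snd p $ snd q)"

text \<open>v \<otimes> I_k for a column vector v in R^2 (a 2k x k matrix).\<close>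
definition kronI :: "real^2 \<Rightarrow> real^'k^(2 \<times> 'k)" where
  "kronI v = (\<chi> p j. v $ fst p * (if snd p = j then 1 else 0))"

definition colmat :: "real^'n \<Rightarrow> real^1^'n" where
  "colmat v = (\<chi> i j. v $ i)"

definition projm :: "real^'c^'r \<Rightarrow> real^'r^'r" where
  "projm A = A ** matrix_inv (transpose A ** A) ** transpose A"

definition e1 :: "real^2" where "e1 = axis 1 1"
definition e2 :: "real^2" where "e2 = axis 2 1"
definition aD :: "real \<Rightarrow> real^2" where "aD \<Delta> = vector [\<Delta>, 1]"

definition Cmat :: "real^(2 \<times> 'k)^(2 \<times> 'k) \<Rightarrow> real^'k^'k" where
  "Cmat Sig = matrix_inv (msqrt (transpose (kronI e1) ** Sig ** (kronI e1 :: real^'k^(2 \<times> 'k))))"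

definition Mmat :: "real^(2 \<times> 'k)^(2 \<times> 'k) \<Rightarrow> real^'k^'k" where
  "Mmat Sig = transpose (kronI e2) ** matrix_inv Sig ** (kronI e2 :: real^'k^(2 \<times> 'k))"

definition Dmat :: "real^(2 \<times> 'k)^(2 \<times> 'k) \<Rightarrow> real^'k^'k" where
  "Dmat Sig = msqrt (Mmat Sig)"

definition Sstat :: "real^2^'k \<Rightarrow> real^(2 \<times> 'k)^(2 \<times> 'k) \<Rightarrow> real^'k" where
  "Sstat R Sig = Cmat Sig *v (transpose (kronI e1 :: real^'k^(2 \<times> 'k)) *v vecm R)"

definition Tstat :: "real^2^'k \<Rightarrow> real^(2 \<times> 'k)^(2 \<times> 'k) \<Rightarrow> real^'k" where
  "Tstat R Sig = matrix_inv (msqrt (Mmat Sig)) *v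
     (transpose (kronI e2 :: real^'k^(2 \<times> 'k)) *v (matrix_inv Sig *v vecm R))"

definition AR :: "real^2^'k \<Rightarrow> real^(2 \<times> 'k)^(2 \<times> 'k) \<Rightarrow> real" where
  "AR R Sig = Sstat R Sig \<bullet> Sstat R Sig"

definition LM :: "real^2^'k \<Rightarrow> real^(2 \<times> 'k)^(2 \<times> 'k) \<Rightarrow> real" where
  "LM R Sig = Sstat R Sig \<bullet>
     (projm (colmat (Cmat Sig *v (matrix_inv (Dmat Sig) *v Tstat R Sig))) *v Sstat R Sig)"

definition LR :: "real^2^'k \<Rightarrow> real^(2 \<times> 'k)^(2 \<times> 'k) \<Rightarrow> real" where
  "LR R Sig = (SUP \<Delta>::real. vecm R \<bullet> (matrix_inv (msqrt Sig) *v
        (projm (matrix_inv (msqrt Sig) ** (kronI (aD \<Delta>) :: real^'k^(2 \<times> 'k)))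
           *v (matrix_inv (msqrt Sig) *v vecm R))))
     - Tstat R Sig \<bullet> Tstat R Sig"

definition QLR :: "real^2^'k \<Rightarrow> real^(2 \<times> 'k)^(2 \<times> 'k) \<Rightarrow> real" where
  "QLR R Sig = (let a = AR R Sig - Tstat R Sig \<bullet> Tstat R Sig in
     (a + sqrt (a\<^sup>2 + 4 * LM R Sig * (Tstat R Sig \<bullet> Tstat R Sig))) / 2)"

definition actR :: "real^'k^'k \<Rightarrow> real^2^2 \<Rightarrow> real^2^'k \<Rightarrow> real^2^'k" where
  "actR g1 g2 R = g1 ** R ** transpose g2"

definition actS :: "real^'k^'k \<Rightarrow> real^2^2 \<Rightarrow> real^(2 \<times> 'k)^(2 \<times> 'k) \<Rightarrow> real^(2 \<times> 'k)^(2 \<times> 'k)" where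
  "actS g1 g2 Sig = kron g2 g1 ** Sig ** kron (transpose g2) (transpose g1)"

definition lower_tri2 :: "real^2^2 \<Rightarrow> bool" where
  "lower_tri2 g \<longleftrightarrow> g $ 1 $ 2 = 0"

end

theory Submission
  imports Defs
begin

lemma sym_dot:
  fixes A :: "real^'n^'n"
  assumes "transpose A = A"
  shows "x \<bullet> (A *v y) = (A *v x) \<bullet> y"
proof -
  have "x \<bullet> (A *v y) = (x v* A) \<bullet> y" by (simp add: dot_lmul_matrix)
  also have "x v* A = transpose A *v x" by simp
  finally show ?thesis using assms by simp
qed

lemma exists_eigen:
  fixes A :: "real^'n^'n"
  assumes symA: "transpose A = A" and sV: "subspace V" and inv: "\<forall>x\<in>V. A *v x \<in> V"
    and ne: "V \<noteq> {0}"
  shows "\<exists>v\<in>V. norm v = 1 \<and> A *v v = (v \<bullet> (A *v v)) *\<^sub>R v"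
proof -
  let ?S = "V \<inter> sphere 0 1"
  have cS: "compact ?S"
    by (intro closed_Int_compact closed_subspace sV compact_sphere)
  obtain x where x: "x \<in> V" "x \<noteq> 0" using ne sV subspace_0 by blast
  have "x /\<^sub>R norm x \<in> ?S" using x sV by (simp add: subspace_mul)
  then have neS: "?S \<noteq> {}" by blast
  have cont: "continuous_on ?S (\<lambda>x. x \<bullet> (A *v x))"
    by (intro continuous_intros linear_continuous_on matrix_vector_mul_linear)
  obtain v where v: "v \<in> ?S" and vmax: "\<forall>y\<in>?S. y \<bullet> (A *v y) \<le> v \<bullet> (A *v v)"
    using continuous_attains_sup[OF cS neS cont] by blast
  define l where "l = v \<bullet> (A *v v)"
  have vV: "v \<in> V" and nv: "norm v = 1" using v by auto
  have vv: "v \<bullet> v = 1" using nv by (simp add: norm_eq_1)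
  have bound: "y \<bullet> (A *v y) \<le> l * (y \<bullet> y)" if yV: "y \<in> V" for y
  proof (cases "y = 0")
    case True then show ?thesis by simp
  next
    case False
    let ?z = "y /\<^sub>R norm y"
    have "?z \<in> ?S" using yV False sV by (simp add: subspace_mul)
    then have "?z \<bullet> (A *v ?z) \<le> l" using vmax l_def by blast
    moreover have "?z \<bullet> (A *v ?z) = (y \<bullet> (A *v y)) / (norm y)^2"
      by (simp add: matrix_vector_mult_scaleR power2_eq_square divide_inverse mult.commute mult.left_commute)
    moreover have "y \<bullet> y = (norm y)^2" by (simp add: power2_norm_eq_inner)
    moreover have "norm y > 0" using False by simp
    ultimately show ?thesis by (simp add: divide_le_eq mult.commute)
  qed
  define w where "w = A *v v - l *\<^sub>R v"
  have wV: "w \<in> V" unfolding w_def using inv vV sV by (simp add: subspace_diff subspace_mul)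
  have wv: "w \<bullet> v = 0" unfolding w_def l_def using vv
    using vv by (simp add: inner_diff_left inner_commute[of "A *v v" v])
  have wAv: "w \<bullet> (A *v v) = w \<bullet> w"
  proof -
    have "A *v v = w + l *\<^sub>R v" unfolding w_def by simp
    then show ?thesis using wv by (simp add: inner_add_right inner_commute)
  qed
  define K where "K = l * (w \<bullet> w) - w \<bullet> (A *v w)"
  have key: "2 * t * (w \<bullet> w) \<le> t^2 * K" for t
  proof -
    have "v + t *\<^sub>R w \<in> V" using vV wV sV by (simp add: subspace_add subspace_mul)
    then have b: "(v + t *\<^sub>R w) \<bullet> (A *v (v + t *\<^sub>R w)) \<le> l * ((v + t *\<^sub>R w) \<bullet> (v + t *\<^sub>R w))"
      by (rule bound)
    have e1: "(v + t *\<^sub>R w) \<bullet> (A *v (v + t *\<^sub>R w)) = l + 2 * t * (w \<bullet> w) + t^2 * (w \<bullet> (A *v w))"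
    proof -
      have "v \<bullet> (A *v w) = w \<bullet> (A *v v)" using sym_dot[OF symA, of v w] by (simp add: inner_commute)
      then show ?thesis
        by (simp add: matrix_vector_right_distrib matrix_vector_mult_scaleR inner_add_left inner_add_right
            l_def wAv power2_eq_square algebra_simps)
    qed
    have e2: "(v + t *\<^sub>R w) \<bullet> (v + t *\<^sub>R w) = 1 + t^2 * (w \<bullet> w)"
      using vv wv by (simp add: inner_add_left inner_add_right inner_commute power2_eq_square)
    have "l + 2 * t * (w \<bullet> w) + t^2 * (w \<bullet> (A *v w)) \<le> l * (1 + t^2 * (w \<bullet> w))"
      using b unfolding e1 e2 .
    then show ?thesis unfolding K_def by (simp add: algebra_simps)
  qed
  have "w \<bullet> w \<le> 0"
  proof (rule ccontr)
    assume "\<not> w \<bullet> w \<le> 0"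
    then have p: "w \<bullet> w > 0" by linarith
    define t where "t = (w \<bullet> w) / (\<bar>K\<bar> + 1)"
    have tp: "t > 0" using p unfolding t_def by (simp add: add_pos_nonneg)
    have "2 * t * (w \<bullet> w) \<le> t^2 * K" by (rule key)
    then have "2 * (w \<bullet> w) \<le> t * K" using tp by (simp add: power2_eq_square mult.assoc)
    also have "t * K \<le> t * \<bar>K\<bar>" using tp by (simp add: mult_left_mono)
    also have "t * \<bar>K\<bar> \<le> w \<bullet> w" unfolding t_def using p
      by (simp add: divide_le_eq mult_left_mono)
    finally show False using p by simp
  qed
  then have "w = 0" by (metis inner_ge_zero order_antisym inner_eq_zero_iff)
  then show ?thesis using vV nv unfolding w_def l_def by auto
qed

lemma spectral_sub:
  fixes A :: "real^'n^'n"
  assumes symA: "transpose A = A"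
  shows "subspace V \<Longrightarrow> (\<forall>x\<in>V. A *v x \<in> V) \<Longrightarrow>
    \<exists>B. B \<subseteq> V \<and> pairwise orthogonal B \<and> (\<forall>b\<in>B. norm b = 1 \<and> A *v b = (b \<bullet> (A *v b)) *\<^sub>R b) \<and> span B = V"
proof (induction "dim V" arbitrary: V rule: less_induct)
  case less
  show ?case
  proof (cases "V = {0}")
    case True
    then show ?thesis by (intro exI[of _ "{}"]) auto
  next
    case False
    obtain v where vV: "v \<in> V" and nv: "norm v = 1" and ev: "A *v v = (v \<bullet> (A *v v)) *\<^sub>R v"
      using exists_eigen[OF symA less.prems False] by blast
    define l where "l = v \<bullet> (A *v v)"
    have vv: "v \<bullet> v = 1" using nv by (simp add: norm_eq_1)
    define V' where "V' = V \<inter> {x. v \<bullet> x = 0}"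
    have sV': "subspace V'" unfolding V'_def
      by (intro subspace_inter less.prems(1) subspace_hyperplane)
    have invV': "\<forall>x\<in>V'. A *v x \<in> V'"
    proof
      fix x assume x: "x \<in> V'"
      have "v \<bullet> (A *v x) = (A *v v) \<bullet> x" by (rule sym_dot[OF symA])
      also have "\<dots> = l * (v \<bullet> x)" using ev l_def by (metis inner_scaleR_left)
      also have "\<dots> = 0" using x unfolding V'_def by simp
      finally show "A *v x \<in> V'" using x less.prems(2) unfolding V'_def by auto
    qed
    have sub: "V' \<subset> V" using vV vv unfolding V'_def by (metis (mono_tags, lifting) Int_iff mem_Collect_eq psubsetI inf_le1 zero_neq_one)
    have "dim V' < dim V"
      using dim_psubset[of V' V] sub span_eq_iff[THEN iffD2, OF sV'] span_eq_iff[THEN iffD2, OF less.prems(1)] by simp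
    then obtain B' where B': "B' \<subseteq> V'" "pairwise orthogonal B'"
        "\<forall>b\<in>B'. norm b = 1 \<and> A *v b = (b \<bullet> (A *v b)) *\<^sub>R b" "span B' = V'"
      using less.hyps[OF _ sV' invV'] by blast
    have vB': "v \<notin> B'" using B'(1) vv unfolding V'_def by auto
    show ?thesis
    proof (intro exI[of _ "insert v B'"] conjI)
      show "insert v B' \<subseteq> V" using B'(1) vV unfolding V'_def by auto
      show "pairwise orthogonal (insert v B')"
        using B'(1,2) unfolding V'_def
        by (auto simp: pairwise_insert orthogonal_def inner_commute)
      show "\<forall>b\<in>insert v B'. norm b = 1 \<and> A *v b = (b \<bullet> (A *v b)) *\<^sub>R b"
        using B'(3) nv ev by auto
      show "span (insert v B') = V"
      proof
        show "span (insert v B') \<subseteq> V"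
          using B'(1) vV less.prems(1) unfolding V'_def
          by (metis (no_types, lifting) Int_subset_iff insert_subset span_minimal)
        show "V \<subseteq> span (insert v B')"
        proof
          fix x assume x: "x \<in> V"
          let ?y = "x - (v \<bullet> x) *\<^sub>R v"
          have "?y \<in> V'" unfolding V'_def using x vV less.prems(1) vv
            by (simp add: subspace_diff subspace_mul inner_diff_right)
          then have "?y \<in> span (insert v B')" using B'(4) by (metis span_mono subset_insertI subsetD)
          moreover have "(v \<bullet> x) *\<^sub>R v \<in> span (insert v B')" by (simp add: span_base span_mul)
          ultimately have "?y + (v \<bullet> x) *\<^sub>R v \<in> span (insert v B')" by (rule span_add)
          then show "x \<in> span (insert v B')" by simp
        qed
      qed
    qed
  qed
qed

lemma spectral:
  fixes A :: "real^'n^'n"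
  assumes symA: "transpose A = A"
  shows "\<exists>B. finite B \<and> pairwise orthogonal B \<and> (\<forall>b\<in>B. norm b = 1 \<and> A *v b = (b \<bullet> (A *v b)) *\<^sub>R b) \<and> span B = UNIV"
proof -
  obtain B where B: "pairwise orthogonal B" "\<forall>b\<in>B. norm b = 1 \<and> A *v b = (b \<bullet> (A *v b)) *\<^sub>R b" "span B = UNIV"
    using spectral_sub[OF symA, of UNIV] by auto
  have "0 \<notin> B" using B(2) by force
  then have "independent B" using B(1) pairwise_orthogonal_independent by blast
  then have "finite B" by (metis finiteI_independent)
  then show ?thesis using B by blast
qed

lemma orth_basis_nonzero:
  fixes x :: "real^'n"
  assumes "span B = UNIV" "x \<noteq> 0"
  shows "\<exists>b\<in>B. b \<bullet> x \<noteq> 0"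
proof (rule ccontr)
  assume "\<not> ?thesis"
  then have "\<And>y. y \<in> B \<Longrightarrow> orthogonal x y" by (simp add: orthogonal_def inner_commute)
  then have "orthogonal x x" using orthogonal_to_span[of x B x] assms(1) by auto
  then show False using assms(2) by (simp add: orthogonal_def)
qed

definition outer :: "real^'n \<Rightarrow> real^'n \<Rightarrow> real^'n^'n" where
  "outer a b = (\<chi> i j. a $ i * b $ j)"

lemma outer_mult: "outer a b *v x = (b \<bullet> x) *\<^sub>R a"
  by (simp add: outer_def matrix_vector_mult_def vec_eq_iff inner_vec_def sum_distrib_left mult.commute mult.left_commute)

lemma transpose_outer: "transpose (outer a a) = outer a a"
  by (simp add: outer_def transpose_def vec_eq_iff mult.commute)

lemma transpose_add_m: "transpose ((A::real^'n^'m) + B) = transpose A + transpose B"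
  by (simp add: transpose_def vec_eq_iff)

lemma transpose_sum_m: "finite S \<Longrightarrow> transpose (sum (f::_\<Rightarrow>real^'n^'m) S) = sum (\<lambda>x. transpose (f x)) S"
  by (induction S rule: finite_induct) (auto simp: transpose_add_m transpose_def vec_eq_iff)

lemma sum_mv: "finite S \<Longrightarrow> sum (f::_\<Rightarrow>real^'n^'m) S *v x = sum (\<lambda>y. f y *v x) S"
  by (induction S rule: finite_induct) (auto simp: matrix_vector_mult_add_rdistrib)

lemma msqrt_exists:
  fixes A :: "real^'n^'n"
  assumes pA: "pos_def A"
  shows "\<exists>S. pos_def S \<and> S ** S = A"
proof -
  have symA: "transpose A = A" using pA pos_def_def by blast
  obtain B where fB: "finite B" and oB: "pairwise orthogonal B"
    and eB: "\<forall>b\<in>B. norm b = 1 \<and> A *v b = (b \<bullet> (A *v b)) *\<^sub>R b" and sB: "span B = UNIV"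
    using spectral[OF symA] by blast
  define l where "l b = b \<bullet> (A *v b)" for b
  have lpos: "l b > 0" if "b \<in> B" for b
    using pA eB that unfolding pos_def_def l_def by (metis norm_zero zero_neq_one)
  define S where "S = (\<Sum>b\<in>B. sqrt (l b) *\<^sub>R outer b b)"
  have Sx: "S *v x = (\<Sum>b\<in>B. (sqrt (l b) * (b \<bullet> x)) *\<^sub>R b)" for x
    unfolding S_def using fB by (simp add: sum_mv scaleR_matrix_vector_assoc[symmetric] outer_mult)
  have bb: "b \<bullet> c = (if b = c then 1 else 0)" if "b \<in> B" "c \<in> B" for b c
    using that oB eB by (auto simp: pairwise_def orthogonal_def norm_eq_1)
  have Sb: "S *v c = sqrt (l c) *\<^sub>R c" if c: "c \<in> B" for c
  proof -
    have "S *v c = (\<Sum>b\<in>B. (if b = c then sqrt (l c) *\<^sub>R c else 0))"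
      unfolding Sx by (rule sum.cong) (auto simp: bb c)
    also have "\<dots> = sqrt (l c) *\<^sub>R c" using fB c by simp
    finally show ?thesis .
  qed
  have SS: "S ** S = A"
  proof -
    have "(S ** S) *v x = A *v x" for x
    proof (rule real_vector.linear_eq_on_span[where B=B and f="(*v) (S ** S)" and g="(*v) A"])
      show "linear ((*v) (S ** S))" by (rule matrix_vector_mul_linear)
      show "linear ((*v) A)" by (rule matrix_vector_mul_linear)
      show "x \<in> span B" using sB by simp
      fix c assume c: "c \<in> B"
      have "(S ** S) *v c = S *v (S *v c)" by (simp add: matrix_vector_mul_assoc)
      also have "\<dots> = sqrt (l c) *\<^sub>R (sqrt (l c) *\<^sub>R c)"
        by (simp add: Sb c matrix_vector_mult_scaleR)
      also have "\<dots> = l c *\<^sub>R c" using lpos[OF c] by simp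
      also have "\<dots> = A *v c" using eB c l_def by simp
      finally show "(S ** S) *v c = A *v c" .
    qed
    then show ?thesis by (simp add: matrix_eq)
  qed
  have tS: "transpose S = S"
    unfolding S_def using fB by (simp add: transpose_sum_m transpose_scalar transpose_outer)
  have pS: "x \<bullet> (S *v x) > 0" if x0: "x \<noteq> 0" for x
  proof -
    obtain c where c: "c \<in> B" "c \<bullet> x \<noteq> 0" using orth_basis_nonzero[OF sB x0] by blast
    have "x \<bullet> (S *v x) = (\<Sum>b\<in>B. sqrt (l b) * (b \<bullet> x)^2)"
      unfolding Sx by (simp add: inner_sum_right power2_eq_square inner_commute mult.assoc)
    also have "\<dots> \<ge> sqrt (l c) * (c \<bullet> x)^2"
      by (rule member_le_sum[OF c(1) _ fB]) (simp add: lpos less_imp_le)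
    moreover have "sqrt (l c) * (c \<bullet> x)^2 > 0" using c lpos by simp
    ultimately show ?thesis by linarith
  qed
  show ?thesis using tS pS SS unfolding pos_def_def by blast
qed

lemma msqrt_unique:
  fixes S T :: "real^'n^'n"
  assumes pS: "pos_def S" and pT: "pos_def T" and eq: "S ** S = T ** T"
  shows "S = T"
proof -
  have symS: "transpose S = S" using pS pos_def_def by blast
  obtain B where fB: "finite B"
    and eB: "\<forall>b\<in>B. norm b = 1 \<and> S *v b = (b \<bullet> (S *v b)) *\<^sub>R b" and sB: "span B = UNIV"
    using spectral[OF symS] by blast
  have "S *v x = T *v x" for x
  proof (rule real_vector.linear_eq_on_span[where B=B and f="(*v) S" and g="(*v) T"])
    show "linear ((*v) S)" by (rule matrix_vector_mul_linear)
    show "linear ((*v) T)" by (rule matrix_vector_mul_linear)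
    show "x \<in> span B" using sB by simp
    fix c assume c: "c \<in> B"
    define m where "m = c \<bullet> (S *v c)"
    have Sc: "S *v c = m *\<^sub>R c" using eB c m_def by simp
    have mpos: "m > 0" using pS eB c unfolding pos_def_def m_def by (metis norm_zero zero_neq_one)
    define y where "y = T *v c - m *\<^sub>R c"
    have "T *v (T *v c) = S *v (S *v c)" using eq by (simp add: matrix_vector_mul_assoc)
    also have "\<dots> = (m * m) *\<^sub>R c" by (simp add: Sc matrix_vector_mult_scaleR)
    finally have TTc: "T *v (T *v c) = (m * m) *\<^sub>R c" .
    have "T *v y + m *\<^sub>R y = 0"
      unfolding y_def using TTc
      by (simp add: matrix_vector_mult_diff_distrib matrix_vector_mult_scaleR algebra_simps)
    then have "y \<bullet> (T *v y) + m * (y \<bullet> y) = 0"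
      by (metis inner_add_right inner_scaleR_right inner_zero_right)
    then have "y = 0" using pT mpos unfolding pos_def_def
      by (metis add_pos_pos inner_gt_zero_iff less_irrefl mult_pos_pos)
    then show "S *v c = T *v c" using Sc unfolding y_def by simp
  qed
  then show ?thesis by (simp add: matrix_eq)
qed

lemma msqrt:
  fixes A :: "real^'n^'n"
  assumes "pos_def A"
  shows "pos_def (msqrt A) \<and> msqrt A ** msqrt A = A"
proof -
  have "\<exists>!S. pos_def S \<and> S ** S = A"
    using msqrt_exists[OF assms] msqrt_unique by metis
  then show ?thesis unfolding msqrt_def by (rule theI')
qed


lemma inj_invertible:
  fixes A :: "real^'n^'n"
  assumes "\<And>x. A *v x = 0 \<Longrightarrow> x = 0"
  shows "invertible A"
proof -
  have "inj ((*v) A)"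
  proof (rule injI)
    fix x y assume "A *v x = A *v y"
    then have "A *v (x - y) = 0" by (simp add: matrix_vector_mult_diff_distrib)
    then have "x - y = 0" by (rule assms)
    then show "x = y" by simp
  qed
  then show ?thesis using invertible_left_inverse matrix_left_invertible_injective by blast
qed

lemma minv:
  fixes A :: "real^'n^'n"
  assumes "invertible A"
  shows "A ** matrix_inv A = mat 1" "matrix_inv A ** A = mat 1"
proof -
  have "\<exists>A'. A ** A' = mat 1 \<and> A' ** A = mat 1" using assms invertible_def by blast
  then have "A ** matrix_inv A = mat 1 \<and> matrix_inv A ** A = mat 1"
    unfolding matrix_inv_def by (rule someI_ex)
  then show "A ** matrix_inv A = mat 1" "matrix_inv A ** A = mat 1" by auto
qed

lemma minv_unique:
  fixes A B :: "real^'n^'n"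
  assumes "A ** B = mat 1"
  shows "matrix_inv A = B"
proof -
  have iA: "invertible A" using assms invertible_right_inverse by blast
  have "matrix_inv A = matrix_inv A ** (A ** B)" using assms by simp
  also have "\<dots> = B" by (simp add: matrix_mul_assoc minv(2)[OF iA])
  finally show ?thesis .
qed

lemma minv_invertible:
  fixes A :: "real^'n^'n"
  assumes "invertible A"
  shows "invertible (matrix_inv A)"
  using minv[OF assms] invertible_def by blast

lemma minv_minv:
  fixes A :: "real^'n^'n"
  assumes "invertible A"
  shows "matrix_inv (matrix_inv A) = A"
  by (rule minv_unique) (rule minv(2)[OF assms])

lemma minv_mult:
  fixes A B :: "real^'n^'n"
  assumes "invertible A" "invertible B"
  shows "matrix_inv (A ** B) = matrix_inv B ** matrix_inv A"
proof (rule minv_unique)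
  have "A ** B ** (matrix_inv B ** matrix_inv A) = A ** (B ** matrix_inv B) ** matrix_inv A"
    by (simp add: matrix_mul_assoc)
  then show "A ** B ** (matrix_inv B ** matrix_inv A) = mat 1"
    by (simp add: minv assms)
qed

lemma minv_transpose:
  fixes A :: "real^'n^'n"
  assumes "invertible A"
  shows "matrix_inv (transpose A) = transpose (matrix_inv A)"
proof (rule minv_unique)
  have "transpose A ** transpose (matrix_inv A) = transpose (matrix_inv A ** A)"
    by (simp add: matrix_transpose_mul)
  then show "transpose A ** transpose (matrix_inv A) = mat 1" by (simp add: minv assms)
qed

lemma minv_scale:
  fixes A :: "real^'n^'n"
  assumes "invertible A" "c \<noteq> 0"
  shows "matrix_inv (c *\<^sub>R A) = (1/c) *\<^sub>R matrix_inv A"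
proof (rule minv_unique)
  show "c *\<^sub>R A ** ((1/c) *\<^sub>R matrix_inv A) = mat 1"
    using assms by (simp add: matrix_scalar_ac minv)
qed

lemma invertible_transpose_iff:
  fixes A :: "real^'n^'n"
  shows "invertible (transpose A) \<longleftrightarrow> invertible A"
  by (metis transpose_invertible transpose_transpose)

lemma dot_transpose: "x \<bullet> (transpose B *v w) = ((B::real^'n^'m) *v x) \<bullet> w"
  by (metis dot_lmul_matrix inner_commute transpose_matrix_vector)

lemma dot_vmul: "x \<bullet> (w v* B) = ((B::real^'n^'m) *v x) \<bullet> w"
  using dot_transpose[of x B w] by simp

lemma pd_sym: "pos_def A \<Longrightarrow> transpose A = A"
  by (simp add: pos_def_def)

lemma pd_pos: "pos_def A \<Longrightarrow> x \<noteq> 0 \<Longrightarrow> x \<bullet> (A *v x) > 0"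
  by (simp add: pos_def_def)

lemma pd_invertible:
  fixes A :: "real^'n^'n"
  assumes "pos_def A"
  shows "invertible A"
proof (rule inj_invertible)
  fix x assume "A *v x = 0"
  then show "x = 0" using pd_pos[OF assms, of x] by fastforce
qed

lemma pd_congr:
  fixes A :: "real^'n^'n" and B :: "real^'m^'n"
  assumes pA: "pos_def A" and inj: "\<And>x. B *v x = 0 \<Longrightarrow> x = 0"
  shows "pos_def (transpose B ** A ** B)"
  unfolding pos_def_def
proof (intro conjI allI impI)
  show "transpose (transpose B ** A ** B) = transpose B ** A ** B"
    by (simp add: matrix_transpose_mul pd_sym[OF pA] matrix_mul_assoc)
  fix x :: "real^'m" assume "x \<noteq> 0"
  then have "B *v x \<noteq> 0" using inj by blast
  then have "(B *v x) \<bullet> (A *v (B *v x)) > 0" by (rule pd_pos[OF pA])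
  moreover have "x \<bullet> ((transpose B ** A ** B) *v x) = (B *v x) \<bullet> (A *v (B *v x))"
    by (simp add: matrix_vector_mul_assoc[symmetric] dot_vmul)
  ultimately show "x \<bullet> ((transpose B ** A ** B) *v x) > 0" by simp
qed

lemma pd_inv:
  fixes A :: "real^'n^'n"
  assumes pA: "pos_def A"
  shows "pos_def (matrix_inv A)"
  unfolding pos_def_def
proof (intro conjI allI impI)
  have iA: "invertible A" by (rule pd_invertible[OF pA])
  show "transpose (matrix_inv A) = matrix_inv A"
    using minv_transpose[OF iA] pd_sym[OF pA] by simp
  fix x :: "real^'n" assume x: "x \<noteq> 0"
  define y where "y = matrix_inv A *v x"
  have xy: "x = A *v y" unfolding y_def by (simp add: matrix_vector_mul_assoc minv[OF iA])
  then have "y \<noteq> 0" using x by auto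
  then have "y \<bullet> (A *v y) > 0" by (rule pd_pos[OF pA])
  moreover have "x \<bullet> (matrix_inv A *v x) = y \<bullet> (A *v y)"
    by (simp add: xy[symmetric] y_def[symmetric] inner_commute)
  ultimately show "x \<bullet> (matrix_inv A *v x) > 0" by simp
qed

lemma msqrt_inv:
  fixes A :: "real^'n^'n"
  assumes pA: "pos_def A"
  shows "transpose (matrix_inv (msqrt A)) = matrix_inv (msqrt A)"
    "matrix_inv (msqrt A) ** matrix_inv (msqrt A) = matrix_inv A"
    "invertible (matrix_inv (msqrt A))"
proof -
  have m: "pos_def (msqrt A)" "msqrt A ** msqrt A = A" using msqrt[OF pA] by auto
  have iS: "invertible (msqrt A)" by (rule pd_invertible[OF m(1)])
  show "transpose (matrix_inv (msqrt A)) = matrix_inv (msqrt A)"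
    using minv_transpose[OF iS] pd_sym[OF m(1)] by simp
  show "matrix_inv (msqrt A) ** matrix_inv (msqrt A) = matrix_inv A"
    using minv_mult[OF iS iS] m(2) by simp
  show "invertible (matrix_inv (msqrt A))" by (rule minv_invertible[OF iS])
qed

lemma msqrt_inv_dot:
  fixes A :: "real^'n^'n"
  assumes pA: "pos_def A"
  shows "(matrix_inv (msqrt A) *v y) \<bullet> (matrix_inv (msqrt A) *v z) = y \<bullet> (matrix_inv A *v z)"
proof -
  let ?Q = "matrix_inv (msqrt A)"
  have "(?Q *v y) \<bullet> (?Q *v z) = y \<bullet> (?Q *v (?Q *v z))"
    using sym_dot[OF msqrt_inv(1)[OF pA], of y "?Q *v z"] by simp
  also have "\<dots> = y \<bullet> (matrix_inv A *v z)"
    by (simp add: matrix_vector_mul_assoc msqrt_inv(2)[OF pA])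
  finally show ?thesis .
qed

lemma bf_congr:
  fixes L P :: "real^'n^'n"
  assumes iL: "invertible L" and iP: "invertible P"
  shows "(L *v y) \<bullet> (matrix_inv (L ** P ** transpose L) *v (L *v z)) = y \<bullet> (matrix_inv P *v z)"
proof -
  have iLt: "invertible (transpose L)" using iL invertible_transpose_iff by blast
  have "matrix_inv (L ** P ** transpose L) = matrix_inv (transpose L) ** matrix_inv (L ** P)"
    by (simp add: minv_mult iLt invertible_mult iL iP)
  also have "\<dots> = transpose (matrix_inv L) ** (matrix_inv P ** matrix_inv L)"
    by (simp add: minv_mult iL iP minv_transpose)
  finally have e: "matrix_inv (L ** P ** transpose L) = transpose (matrix_inv L) ** (matrix_inv P ** matrix_inv L)" .
  have "(L *v y) \<bullet> (matrix_inv (L ** P ** transpose L) *v (L *v z))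
      = (L *v y) \<bullet> (transpose (matrix_inv L) *v (matrix_inv P *v (matrix_inv L *v (L *v z))))"
    by (simp add: e matrix_vector_mul_assoc[symmetric])
  also have "\<dots> = (matrix_inv L *v (L *v y)) \<bullet> (matrix_inv P *v (matrix_inv L *v (L *v z)))"
    by (simp add: dot_vmul)
  also have "\<dots> = y \<bullet> (matrix_inv P *v z)"
    by (simp add: matrix_vector_mul_assoc minv(2)[OF iL])
  finally show ?thesis .
qed


lemma sum_UNIV_prod:
  "(\<Sum>q\<in>(UNIV::('a::finite \<times> 'b::finite) set). f q) = (\<Sum>a\<in>UNIV. \<Sum>b\<in>UNIV. f (a, b))"
proof -
  have "(\<Sum>a\<in>UNIV. \<Sum>b\<in>UNIV. f (a, b)) = (\<Sum>(a,b)\<in>UNIV \<times> UNIV. f (a, b))"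
    by (rule sum.cartesian_product)
  then show ?thesis by simp
qed

lemma kron_mult:
  fixes A :: "real^'b^'a" and B :: "real^'d^'c" and C :: "real^'e^'b" and D :: "real^'f^'d"
  shows "kron A B ** kron C D = kron (A ** C) (B ** D)"
proof -
  have "(\<Sum>q\<in>UNIV. A $ fst p $ fst q * B $ snd p $ snd q * (C $ fst q $ fst r * D $ snd q $ snd r))
     = (\<Sum>k\<in>UNIV. A $ fst p $ k * C $ k $ fst r) * (\<Sum>l\<in>UNIV. B $ snd p $ l * D $ l $ snd r)"
    for p :: "'a \<times> 'c" and r :: "'e \<times> 'f"
    by (simp add: sum_UNIV_prod sum_product mult_ac)
  then show ?thesis
    by (simp add: kron_def matrix_matrix_mult_def vec_eq_iff)
qed

lemma kron_id: "kron (mat 1 :: real^'a^'a) (mat 1 :: real^'b^'b) = mat 1"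
  by (auto simp: kron_def mat_def vec_eq_iff prod_eq_iff)

lemma transpose_kron: "transpose (kron A B) = kron (transpose A) (transpose B)"
  by (simp add: kron_def transpose_def vec_eq_iff)

lemma kron_invertible:
  fixes A :: "real^'a^'a" and B :: "real^'b^'b"
  assumes "invertible A" "invertible B"
  shows "invertible (kron A B)" "matrix_inv (kron A B) = kron (matrix_inv A) (matrix_inv B)"
proof -
  have e: "kron A B ** kron (matrix_inv A) (matrix_inv B) = mat 1"
    by (simp add: kron_mult minv assms kron_id)
  then show "invertible (kron A B)" using invertible_right_inverse by blast
  show "matrix_inv (kron A B) = kron (matrix_inv A) (matrix_inv B)" by (rule minv_unique[OF e])
qed

lemma vecm_act:
  fixes A :: "real^'k^'k" and B :: "real^2^2" and R :: "real^2^'k"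
  shows "vecm (A ** R ** transpose B) = kron B A *v vecm R"
  by (simp add: vecm_def kron_def matrix_matrix_mult_def matrix_vector_mult_def transpose_def
        vec_eq_iff sum_UNIV_prod sum_distrib_left mult_ac)

lemma sum_delta_r: "(\<Sum>q\<in>UNIV. ((f::'a::finite\<Rightarrow>real) q) * (if q = j then 1 else 0)) = f j"
proof -
  have "(\<Sum>q\<in>UNIV. (f q::real) * (if q = j then 1 else 0)) = (\<Sum>q\<in>UNIV. if q = j then f q else 0)"
    by (rule sum.cong) auto
  then show ?thesis by simp
qed

lemma sum_delta_l: "(\<Sum>q\<in>UNIV. (if j = q then 1 else 0) * ((f::'a::finite\<Rightarrow>real) q)) = f j"
proof -
  have "(\<Sum>q\<in>UNIV. (if j = q then 1 else 0) * (f q::real)) = (\<Sum>q\<in>UNIV. if q = j then f q else 0)"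
    by (rule sum.cong) auto
  then show ?thesis by simp
qed

lemma kron_kronI:
  fixes H :: "real^2^2" and K :: "real^'k^'m" and w :: "real^2"
  shows "kron H K ** kronI w = kronI (H *v w) ** K"
proof -
  have L: "(kron H K ** kronI w) $ (p1, p2) $ j = (\<Sum>q1\<in>UNIV. H $ p1 $ q1 * w $ q1) * K $ p2 $ j" for p1 p2 j
  proof -
    have "(kron H K ** kronI w) $ (p1, p2) $ j
      = (\<Sum>q1\<in>UNIV. \<Sum>q2\<in>UNIV. (H $ p1 $ q1 * w $ q1 * K $ p2 $ q2) * (if q2 = j then 1 else 0))"
      by (simp add: kron_def kronI_def matrix_matrix_mult_def sum_UNIV_prod mult_ac)
    also have "\<dots> = (\<Sum>q1\<in>UNIV. H $ p1 $ q1 * w $ q1 * K $ p2 $ j)"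
      by (simp only: sum_delta_r)
    also have "\<dots> = (\<Sum>q1\<in>UNIV. H $ p1 $ q1 * w $ q1) * K $ p2 $ j"
      by (simp add: sum_distrib_right)
    finally show ?thesis .
  qed
  have R: "(kronI (H *v w) ** K) $ (p1, p2) $ j = (\<Sum>q1\<in>UNIV. H $ p1 $ q1 * w $ q1) * K $ p2 $ j" for p1 p2 j
  proof -
    have "(kronI (H *v w) ** K) $ (p1, p2) $ j = (\<Sum>l\<in>UNIV. (if p2 = l then 1 else 0) * ((H *v w) $ p1 * K $ l $ j))"
      by (simp add: kronI_def matrix_matrix_mult_def mult_ac)
    also have "\<dots> = (H *v w) $ p1 * K $ p2 $ j" by (simp only: sum_delta_l)
    finally show ?thesis by (simp add: matrix_vector_mult_def)
  qed
  show ?thesis by (simp add: vec_eq_iff L R)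
qed

lemma kronI_mv: "kronI w *v y = (\<chi> p. w $ fst p * y $ snd p)"
proof -
  have "(\<Sum>j\<in>UNIV. w $ fst p * (if snd p = j then 1 else 0) * y $ j) = w $ fst p * y $ snd p" for p
  proof -
    have "(\<Sum>j\<in>UNIV. w $ fst p * (if snd p = j then 1 else 0) * y $ j)
        = (\<Sum>j\<in>UNIV. if j = snd p then w $ fst p * y $ j else 0)"
      by (rule sum.cong) auto
    then show ?thesis by simp
  qed
  then show ?thesis by (simp add: kronI_def matrix_vector_mult_def vec_eq_iff)
qed

lemma kronI_scale: "kronI (c *\<^sub>R w) = c *\<^sub>R (kronI w :: real^'k^(2\<times>'k))"
  by (simp add: kronI_def vec_eq_iff)

lemma kronI_add: "kronI (v + w) = kronI v + (kronI w :: real^'k^(2\<times>'k))"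
  by (simp add: kronI_def vec_eq_iff algebra_simps)

lemma kronI_inj:
  assumes "w \<noteq> 0" "kronI w *v y = (0::real^(2\<times>'k::finite))"
  shows "y = 0"
proof -
  obtain a where a: "w $ a \<noteq> 0" using assms(1) by (auto simp: vec_eq_iff)
  have "w $ a * y $ j = 0" for j
  proof -
    have "(kronI w *v y) $ (a, j) = 0" using assms(2) by simp
    then show ?thesis by (simp add: kronI_mv)
  qed
  then show ?thesis using a by (simp add: vec_eq_iff)
qed


lemma colmat_mv: "colmat v *v (y::real^1) = (y $ 1) *\<^sub>R v"
  by (simp add: colmat_def matrix_vector_mult_def vec_eq_iff sum_1 mult.commute)

lemma projm_colmat:
  fixes v s :: "real^'n"
  shows "projm (colmat v) *v s = ((v \<bullet> s) / (v \<bullet> v)) *\<^sub>R v"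
proof (cases "v = 0")
  case True
  have "colmat v = (0::real^1^'n)" using True by (simp add: colmat_def vec_eq_iff)
  then show ?thesis using True by (simp add: projm_def)
next
  case False
  have vv: "v \<bullet> v \<noteq> 0" using False by simp
  have tt: "transpose (colmat v) ** colmat v = (\<chi> i j. v \<bullet> v)"
    by (simp add: colmat_def transpose_def matrix_matrix_mult_def vec_eq_iff inner_vec_def)
  have one: "(i::1) = j" for i j by (simp add: num1_eq_iff)
  have "(\<chi> i j. v \<bullet> v :: real^1^1) ** (\<chi> i j. 1 / (v \<bullet> v)) = (mat 1 :: real^1^1)"
    using vv by (simp add: matrix_matrix_mult_def mat_def vec_eq_iff sum_1 one)
  then have inv: "matrix_inv (\<chi> i j. v \<bullet> v) = (\<chi> i j. 1 / (v \<bullet> v) :: real^1^1)"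
    by (rule minv_unique)
  have ts: "transpose (colmat v) *v s = (\<chi> i. v \<bullet> s)"
    by (simp add: colmat_def transpose_def matrix_vector_mult_def vec_eq_iff inner_vec_def)
  have "projm (colmat v) *v s = colmat v *v ((\<chi> i j. 1 / (v \<bullet> v) :: real^1^1) *v (transpose (colmat v) *v s))"
    unfolding projm_def tt inv by (simp only: matrix_vector_mul_assoc matrix_mul_assoc)
  also have "\<dots> = ((v \<bullet> s) / (v \<bullet> v)) *\<^sub>R v"
    unfolding ts colmat_mv by (simp add: matrix_vector_mult_def sum_1)
  finally show ?thesis .
qed

definition r1f :: "real^2^'k \<Rightarrow> real^'k" where
  "r1f R = transpose (kronI e1 :: real^'k^(2 \<times> 'k)) *v vecm R"
definition S11 :: "real^(2 \<times> 'k)^(2 \<times> 'k) \<Rightarrow> real^'k^'k" where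
  "S11 Sig = transpose (kronI e1) ** Sig ** (kronI e1 :: real^'k^(2 \<times> 'k))"
definition uf :: "real^2^'k \<Rightarrow> real^(2 \<times> 'k)^(2 \<times> 'k) \<Rightarrow> real^'k" where
  "uf R Sig = transpose (kronI e2 :: real^'k^(2 \<times> 'k)) *v (matrix_inv Sig *v vecm R)"
definition wf :: "real^2^'k \<Rightarrow> real^(2 \<times> 'k)^(2 \<times> 'k) \<Rightarrow> real^'k" where
  "wf R Sig = matrix_inv (Mmat Sig) *v uf R Sig"

lemma e1_nz: "e1 \<noteq> 0" by (simp add: e1_def)
lemma e2_nz: "e2 \<noteq> 0" by (simp add: e2_def)

lemma pd_S11: "pos_def Sig \<Longrightarrow> pos_def (S11 Sig)"
  unfolding S11_def by (rule pd_congr) (auto intro: kronI_inj[OF e1_nz])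

lemma pd_M: "pos_def Sig \<Longrightarrow> pos_def (Mmat Sig)"
  unfolding Mmat_def by (rule pd_congr[OF pd_inv]) (auto intro: kronI_inj[OF e2_nz])

lemma AR_red: "pos_def Sig \<Longrightarrow> AR R Sig = r1f R \<bullet> (matrix_inv (S11 Sig) *v r1f R)"
  unfolding AR_def Sstat_def Cmat_def r1f_def[symmetric] S11_def[symmetric]
  by (rule msqrt_inv_dot[OF pd_S11])

lemma TT_red: "pos_def Sig \<Longrightarrow> Tstat R Sig \<bullet> Tstat R Sig = uf R Sig \<bullet> (matrix_inv (Mmat Sig) *v uf R Sig)"
  unfolding Tstat_def uf_def[symmetric]
  by (rule msqrt_inv_dot[OF pd_M])

lemma LM_red:
  assumes pS: "pos_def Sig"
  shows "LM R Sig = (r1f R \<bullet> (matrix_inv (S11 Sig) *v wf R Sig))^2 / (wf R Sig \<bullet> (matrix_inv (S11 Sig) *v wf R Sig))"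
proof -
  let ?C = "Cmat Sig" and ?P = "matrix_inv (S11 Sig)"
  have C: "?C = matrix_inv (msqrt (S11 Sig))" unfolding Cmat_def S11_def ..
  have sP: "transpose ?P = ?P" using pd_sym[OF pd_inv[OF pd_S11[OF pS]]] .
  have DT: "matrix_inv (Dmat Sig) *v Tstat R Sig = wf R Sig"
    unfolding Dmat_def Tstat_def wf_def uf_def[symmetric]
    by (simp add: matrix_vector_mul_assoc msqrt_inv(2)[OF pd_M[OF pS]])
  define v where "v = ?C *v wf R Sig"
  have S: "Sstat R Sig = ?C *v r1f R" unfolding Sstat_def r1f_def ..
  have vS: "v \<bullet> Sstat R Sig = r1f R \<bullet> (?P *v wf R Sig)"
    unfolding v_def S C msqrt_inv_dot[OF pd_S11[OF pS]]
    using sym_dot[OF sP, of "wf R Sig" "r1f R"] by (simp add: inner_commute)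
  have vv: "v \<bullet> v = wf R Sig \<bullet> (?P *v wf R Sig)"
    unfolding v_def C msqrt_inv_dot[OF pd_S11[OF pS]] ..
  have "LM R Sig = Sstat R Sig \<bullet> (((v \<bullet> Sstat R Sig) / (v \<bullet> v)) *\<^sub>R v)"
    unfolding LM_def DT v_def[symmetric] projm_colmat ..
  also have "\<dots> = (v \<bullet> Sstat R Sig)^2 / (v \<bullet> v)"
    by (simp add: power2_eq_square inner_commute)
  finally show ?thesis unfolding vS vv .
qed


lemma inv_inj: "invertible (A::real^'n^'n) \<Longrightarrow> A *v x = 0 \<Longrightarrow> x = 0"
  by (metis matrix_vector_mul_assoc matrix_vector_mul_lid matrix_vector_mult_0_right minv(2))

lemma minv_mv: "invertible (A::real^'n^'n) \<Longrightarrow> matrix_inv A *v (A *v x) = x"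
  by (simp add: matrix_vector_mul_assoc minv(2))

context
  fixes g1 :: "real^'k^'k" and g2 :: "real^2^2"
  assumes ig1: "invertible g1" and ig2: "invertible g2" and lt: "lower_tri2 g2"
begin

lemma g2e1: "transpose g2 *v e1 = (g2 $ 1 $ 1) *\<^sub>R e1"
  using lt unfolding e1_def lower_tri2_def matrix_vector_mult_basis
  by (simp add: vec_eq_iff forall_2 column_def transpose_def axis_def)

lemma g2e2: "g2 *v e2 = (g2 $ 2 $ 2) *\<^sub>R e2"
  using lt unfolding e2_def lower_tri2_def matrix_vector_mult_basis
  by (simp add: vec_eq_iff forall_2 column_def axis_def)

lemma a_nz: "g2 $ 1 $ 1 \<noteq> 0"
proof
  assume "g2 $ 1 $ 1 = 0"
  then have "transpose g2 *v e1 = 0" using g2e1 by simp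
  then show False using inv_inj[OF transpose_invertible[OF ig2]] e1_nz by blast
qed

lemma c_nz: "g2 $ 2 $ 2 \<noteq> 0"
proof
  assume "g2 $ 2 $ 2 = 0"
  then have "g2 *v e2 = 0" using g2e2 by simp
  then show False using inv_inj[OF ig2] e2_nz by blast
qed

lemma h2e2: "matrix_inv g2 *v e2 = (1 / g2 $ 2 $ 2) *\<^sub>R e2"
proof -
  have "e2 = matrix_inv g2 *v (g2 *v e2)" by (simp add: matrix_vector_mul_assoc minv(2)[OF ig2])
  also have "\<dots> = (g2 $ 2 $ 2) *\<^sub>R (matrix_inv g2 *v e2)" by (simp add: g2e2 matrix_vector_mult_scaleR)
  finally show ?thesis using c_nz by (metis divide_inverse_commute mult.right_neutral scaleR_scaleR
      inverse_eq_divide left_inverse scaleR_one)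
qed

lemma iG: "invertible (kron g2 g1)" using kron_invertible(1)[OF ig2 ig1] .

lemma F7: "transpose (kronI e1 :: real^'k^(2 \<times> 'k)) ** kron g2 g1 = (g2 $ 1 $ 1 *\<^sub>R g1) ** transpose (kronI e1)"
proof -
  have "transpose (kron g2 g1) ** (kronI e1 :: real^'k^(2 \<times> 'k)) = kronI (transpose g2 *v e1) ** transpose g1"
    by (simp add: transpose_kron kron_kronI)
  also have "\<dots> = (g2 $ 1 $ 1) *\<^sub>R (kronI e1 ** transpose g1)"
    by (simp add: g2e1 kronI_scale scalar_matrix_assoc del: transpose_matrix_vector)
  finally have "transpose (transpose (kron g2 g1) ** (kronI e1 :: real^'k^(2 \<times> 'k))) = transpose ((g2 $ 1 $ 1) *\<^sub>R (kronI e1 ** transpose g1))"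
    by simp
  then show ?thesis by (simp add: matrix_transpose_mul transpose_scalar scalar_matrix_assoc matrix_scalar_ac)
qed

lemma F8: "transpose (kronI e2 :: real^'k^(2 \<times> 'k)) ** transpose (matrix_inv (kron g2 g1))
   = ((1 / g2 $ 2 $ 2) *\<^sub>R transpose (matrix_inv g1)) ** transpose (kronI e2)"
proof -
  have "matrix_inv (kron g2 g1) ** (kronI e2 :: real^'k^(2 \<times> 'k)) = kronI (matrix_inv g2 *v e2) ** matrix_inv g1"
    by (simp add: kron_invertible(2)[OF ig2 ig1] kron_kronI)
  also have "\<dots> = (1 / g2 $ 2 $ 2) *\<^sub>R (kronI e2 ** matrix_inv g1)"
    by (simp add: h2e2 kronI_scale scalar_matrix_assoc)
  finally have "transpose (matrix_inv (kron g2 g1) ** (kronI e2 :: real^'k^(2 \<times> 'k))) = transpose ((1 / g2 $ 2 $ 2) *\<^sub>R (kronI e2 ** matrix_inv g1))"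
    by simp
  then show ?thesis by (simp add: matrix_transpose_mul transpose_scalar scalar_matrix_assoc matrix_scalar_ac)
qed

lemma vecm_actR: "vecm (actR g1 g2 R) = kron g2 g1 *v vecm R"
  unfolding actR_def by (rule vecm_act)

lemma actS_eq: "actS g1 g2 Sig = kron g2 g1 ** Sig ** transpose (kron g2 g1)"
  unfolding actS_def by (simp add: transpose_kron)

lemma pd_act: "pos_def Sig \<Longrightarrow> pos_def (actS g1 g2 Sig)"
  unfolding actS_eq
  using pd_congr[of Sig "transpose (kron g2 g1)"] inv_inj[OF transpose_invertible[OF iG]]
  by simp

lemma inv_act: "pos_def Sig \<Longrightarrow> matrix_inv (actS g1 g2 Sig)
   = transpose (matrix_inv (kron g2 g1)) ** matrix_inv Sig ** matrix_inv (kron g2 g1)"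
  unfolding actS_eq
  by (simp add: minv_mult iG pd_invertible invertible_mult transpose_invertible minv_transpose matrix_mul_assoc)

lemma r1_act: "r1f (actR g1 g2 R) = (g2 $ 1 $ 1 *\<^sub>R g1) *v r1f R"
  unfolding r1f_def vecm_actR
  by (simp add: matrix_vector_mul_assoc F7 del: transpose_matrix_vector)

lemma S11_act: "S11 (actS g1 g2 Sig) = (g2 $ 1 $ 1 *\<^sub>R g1) ** S11 Sig ** transpose (g2 $ 1 $ 1 *\<^sub>R g1)"
proof -
  have t: "transpose (kron g2 g1) ** (kronI e1 :: real^'k^(2 \<times> 'k)) = kronI e1 ** transpose (g2 $ 1 $ 1 *\<^sub>R g1)"
    using arg_cong[OF F7, of transpose] by (simp add: matrix_transpose_mul)
  have "S11 (actS g1 g2 Sig) = (transpose (kronI e1 :: real^'k^(2 \<times> 'k)) ** kron g2 g1) ** Sig ** (transpose (kron g2 g1) ** kronI e1)"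
    unfolding S11_def actS_eq by (simp add: matrix_mul_assoc)
  also have "\<dots> = (g2 $ 1 $ 1 *\<^sub>R g1) ** S11 Sig ** transpose (g2 $ 1 $ 1 *\<^sub>R g1)"
    unfolding F7 t S11_def by (simp add: matrix_mul_assoc)
  finally show ?thesis .
qed

definition L2 :: "real^'k^'k" where "L2 = (1 / g2 $ 2 $ 2) *\<^sub>R transpose (matrix_inv g1)"

lemma u_act: assumes pS: "pos_def Sig" shows "uf (actR g1 g2 R) (actS g1 g2 Sig) = L2 *v uf R Sig"
proof -
  have "uf (actR g1 g2 R) (actS g1 g2 Sig) = (transpose (kronI e2 :: real^'k^(2 \<times> 'k)) ** transpose (matrix_inv (kron g2 g1))) *v
      (matrix_inv Sig *v (matrix_inv (kron g2 g1) *v (kron g2 g1 *v vecm R)))"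
    unfolding uf_def vecm_actR inv_act[OF pS]
    by (simp only: matrix_vector_mul_assoc matrix_mul_assoc)
  also have "\<dots> = L2 *v uf R Sig"
    unfolding F8[folded L2_def] minv_mv[OF iG] uf_def
    by (simp only: matrix_vector_mul_assoc matrix_mul_assoc)
  finally show ?thesis .
qed

lemma M_act: assumes pS: "pos_def Sig" shows "Mmat (actS g1 g2 Sig) = L2 ** Mmat Sig ** transpose L2"
proof -
  have t: "matrix_inv (kron g2 g1) ** (kronI e2 :: real^'k^(2 \<times> 'k)) = kronI e2 ** transpose L2"
    using arg_cong[OF F8[folded L2_def], of transpose] by (simp add: matrix_transpose_mul)
  have "Mmat (actS g1 g2 Sig) = (transpose (kronI e2 :: real^'k^(2 \<times> 'k)) ** transpose (matrix_inv (kron g2 g1))) ** matrix_inv Sig ** (matrix_inv (kron g2 g1) ** kronI e2)"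
    unfolding Mmat_def inv_act[OF pS] by (simp add: matrix_mul_assoc)
  also have "\<dots> = L2 ** Mmat Sig ** transpose L2"
    unfolding F8[folded L2_def] t Mmat_def by (simp add: matrix_mul_assoc)
  finally show ?thesis .
qed

lemma iL1: "invertible (g2 $ 1 $ 1 *\<^sub>R g1)" by (rule scalar_invertible[OF a_nz ig1])

lemma iL2: "invertible L2"
  unfolding L2_def using c_nz
  by (intro scalar_invertible transpose_invertible minv_invertible ig1) simp

lemma invL2: "transpose (matrix_inv L2) = (g2 $ 2 $ 2 / g2 $ 1 $ 1) *\<^sub>R (g2 $ 1 $ 1 *\<^sub>R g1)"
proof -
  have "matrix_inv L2 = g2 $ 2 $ 2 *\<^sub>R transpose g1"
    unfolding L2_def using c_nz
    by (simp add: minv_scale transpose_invertible minv_invertible ig1 minv_transpose minv_minv)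
  then show ?thesis using a_nz by (simp add: transpose_scalar)
qed

lemma w_act: assumes pS: "pos_def Sig" shows "wf (actR g1 g2 R) (actS g1 g2 Sig)
   = (g2 $ 1 $ 1 *\<^sub>R g1) *v ((g2 $ 2 $ 2 / g2 $ 1 $ 1) *\<^sub>R wf R Sig)"
proof -
  have iM: "invertible (Mmat Sig)" by (rule pd_invertible[OF pd_M[OF pS]])
  have iL2t: "invertible (transpose L2)" by (rule transpose_invertible[OF iL2])
  have "wf (actR g1 g2 R) (actS g1 g2 Sig) = matrix_inv (L2 ** Mmat Sig ** transpose L2) *v (L2 *v uf R Sig)"
    unfolding wf_def M_act[OF pS] u_act[OF pS] ..
  also have "\<dots> = transpose (matrix_inv L2) *v wf R Sig"
  proof -
    have "matrix_inv (L2 ** Mmat Sig ** transpose L2) = transpose (matrix_inv L2) ** matrix_inv (Mmat Sig) ** matrix_inv L2"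
      by (simp add: minv_mult iL2 iM iL2t invertible_mult minv_transpose matrix_mul_assoc)
    then have "matrix_inv (L2 ** Mmat Sig ** transpose L2) *v (L2 *v uf R Sig)
        = transpose (matrix_inv L2) *v (matrix_inv (Mmat Sig) *v (matrix_inv L2 *v (L2 *v uf R Sig)))"
      by (simp only: matrix_vector_mul_assoc matrix_mul_assoc)
    then show ?thesis unfolding wf_def minv_mv[OF iL2] by (simp only:)
  qed
  finally show ?thesis unfolding invL2 by (simp add: matrix_vector_mult_scaleR scaleR_matrix_vector_assoc)
qed

end


context
  fixes g1 :: "real^'k^'k" and g2 :: "real^2^2"
  assumes ig1: "invertible g1" and ig2: "invertible g2" and lt: "lower_tri2 g2"
begin

lemma AR_inv:
  assumes pS: "pos_def Sig"
  shows "AR (actR g1 g2 R) (actS g1 g2 Sig) = AR R Sig"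
  unfolding AR_red[OF pd_act[OF ig1 ig2 lt pS]] AR_red[OF pS] r1_act[OF ig1 ig2 lt] S11_act[OF ig1 ig2 lt]
  by (rule bf_congr[OF iL1[OF ig1 ig2 lt] pd_invertible[OF pd_S11[OF pS]]])

lemma TT_inv:
  assumes pS: "pos_def Sig"
  shows "Tstat (actR g1 g2 R) (actS g1 g2 Sig) \<bullet> Tstat (actR g1 g2 R) (actS g1 g2 Sig) = Tstat R Sig \<bullet> Tstat R Sig"
  unfolding TT_red[OF pd_act[OF ig1 ig2 lt pS]] TT_red[OF pS] u_act[OF ig1 ig2 lt pS] M_act[OF ig1 ig2 lt pS]
  by (rule bf_congr[OF iL2[OF ig1 ig2 lt] pd_invertible[OF pd_M[OF pS]]])

lemma LM_inv:
  assumes pS: "pos_def Sig"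
  shows "LM (actR g1 g2 R) (actS g1 g2 Sig) = LM R Sig"
proof -
  define k where "k = g2 $ 2 $ 2 / g2 $ 1 $ 1"
  have k0: "k \<noteq> 0" unfolding k_def using a_nz[OF ig1 ig2 lt] c_nz[OF ig1 ig2 lt] by simp
  let ?L = "g2 $ 1 $ 1 *\<^sub>R g1" and ?P = "matrix_inv (S11 Sig)" and ?w = "wf R Sig" and ?r = "r1f R"
  have bf: "(?L *v y) \<bullet> (matrix_inv (?L ** S11 Sig ** transpose ?L) *v (?L *v z)) = y \<bullet> (?P *v z)" for y z
    by (rule bf_congr[OF iL1[OF ig1 ig2 lt] pd_invertible[OF pd_S11[OF pS]]])
  have "LM (actR g1 g2 R) (actS g1 g2 Sig)
      = ((?L *v ?r) \<bullet> (matrix_inv (?L ** S11 Sig ** transpose ?L) *v (?L *v (k *\<^sub>R ?w))))^2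
        / ((?L *v (k *\<^sub>R ?w)) \<bullet> (matrix_inv (?L ** S11 Sig ** transpose ?L) *v (?L *v (k *\<^sub>R ?w))))"
    unfolding LM_red[OF pd_act[OF ig1 ig2 lt pS]] w_act[OF ig1 ig2 lt pS] r1_act[OF ig1 ig2 lt]
      S11_act[OF ig1 ig2 lt] k_def ..
  also have "\<dots> = (?r \<bullet> (?P *v (k *\<^sub>R ?w)))^2 / ((k *\<^sub>R ?w) \<bullet> (?P *v (k *\<^sub>R ?w)))"
    unfolding bf ..
  also have "\<dots> = (k^2 * (?r \<bullet> (?P *v ?w))^2) / (k^2 * (?w \<bullet> (?P *v ?w)))"
    by (simp add: matrix_vector_mult_scaleR power2_eq_square mult_ac)
  also have "\<dots> = (?r \<bullet> (?P *v ?w))^2 / (?w \<bullet> (?P *v ?w))"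
    using k0 by simp
  also have "\<dots> = LM R Sig" unfolding LM_red[OF pS] ..
  finally show ?thesis .
qed

lemma QLR_inv:
  assumes pS: "pos_def Sig"
  shows "QLR (actR g1 g2 R) (actS g1 g2 Sig) = QLR R Sig"
  unfolding QLR_def AR_inv[OF pS] TT_inv[OF pS] LM_inv[OF pS] ..

end


definition phi :: "real^(2 \<times> 'k::finite)^(2 \<times> 'k) \<Rightarrow> real^(2 \<times> 'k) \<Rightarrow> real^(2 \<times> 'k) \<Rightarrow> real" where
  "phi Sig x u = 2 * (u \<bullet> (matrix_inv Sig *v x)) - u \<bullet> (matrix_inv Sig *v u)"

definition Ufull :: "real^(2 \<times> 'k::finite)^(2 \<times> 'k) \<Rightarrow> real^(2 \<times> 'k) \<Rightarrow> real set" where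
  "Ufull Sig x = (\<lambda>(w, y). phi Sig x (kronI w *v y)) ` UNIV"

lemma dot_mv: "x \<bullet> ((B::real^'n^'m) *v w) = (transpose B *v x) \<bullet> w"
  using dot_transpose[of x "transpose B" w] by simp

lemma phi_bound:
  assumes pS: "pos_def Sig"
  shows "phi Sig x u \<le> x \<bullet> (matrix_inv Sig *v x)"
proof -
  let ?S = "matrix_inv Sig"
  have sS: "transpose ?S = ?S" by (rule pd_sym[OF pd_inv[OF pS]])
  have nn: "(x - u) \<bullet> (?S *v (x - u)) \<ge> 0"
    using pd_pos[OF pd_inv[OF pS], of "x - u"] by (cases "x - u = 0") auto
  have xu: "x \<bullet> (?S *v u) = u \<bullet> (?S *v x)"
    using sym_dot[OF sS, of x u] by (simp add: inner_commute)
  have "(x - u) \<bullet> (?S *v (x - u)) = x \<bullet> (?S *v x) - phi Sig x u"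
    unfolding phi_def using xu
    by (simp add: matrix_vector_mult_diff_distrib inner_diff_left inner_diff_right algebra_simps)
  then show ?thesis using nn by simp
qed

lemma f_var:
  fixes K :: "real^'k^(2 \<times> 'k)" and x :: "real^(2 \<times> 'k)"
  assumes pS: "pos_def Sig" and injK: "\<And>y. K *v y = 0 \<Longrightarrow> y = 0"
  defines "Q \<equiv> matrix_inv (msqrt Sig)"
  defines "f \<equiv> x \<bullet> (Q *v (projm (Q ** K) *v (Q *v x)))"
  shows "\<forall>y. phi Sig x (K *v y) \<le> f" "\<exists>y. f = phi Sig x (K *v y)"
proof -
  let ?S = "matrix_inv Sig"
  define P where "P = transpose K ** ?S ** K"
  define z where "z = transpose K *v (?S *v x)"
  have pP: "pos_def P" unfolding P_def by (rule pd_congr[OF pd_inv[OF pS] injK])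
  have sP: "transpose P = P" by (rule pd_sym[OF pP])
  have iP: "invertible P" by (rule pd_invertible[OF pP])
  have sQ: "transpose Q = Q" unfolding Q_def by (rule msqrt_inv(1)[OF pS])
  have QQ: "Q ** Q = ?S" unfolding Q_def by (rule msqrt_inv(2)[OF pS])
  have tQK: "transpose (Q ** K) ** (Q ** K) = P"
    unfolding P_def matrix_transpose_mul sQ by (simp add: matrix_mul_assoc QQ[symmetric])
  have fz: "f = z \<bullet> (matrix_inv P *v z)"
  proof -
    have "f = (Q *v x) \<bullet> ((Q ** K) *v (matrix_inv P *v (transpose (Q ** K) *v (Q *v x))))"
      unfolding f_def projm_def tQK using sym_dot[OF sQ]
      by (simp only: matrix_vector_mul_assoc[symmetric])
    also have "\<dots> = (transpose (Q ** K) *v (Q *v x)) \<bullet> (matrix_inv P *v (transpose (Q ** K) *v (Q *v x)))"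
      by (rule dot_mv)
    also have "transpose (Q ** K) *v (Q *v x) = z"
      unfolding z_def matrix_transpose_mul sQ
      by (simp only: matrix_vector_mul_assoc matrix_mul_assoc QQ[symmetric])
    finally show ?thesis .
  qed
  have phiK: "phi Sig x (K *v y) = 2 * (y \<bullet> z) - y \<bullet> (P *v y)" for y
  proof -
    have "(K *v y) \<bullet> (?S *v x) = y \<bullet> z" unfolding z_def by (simp add: dot_vmul)
    moreover have "(K *v y) \<bullet> (?S *v (K *v y)) = y \<bullet> (P *v y)"
      unfolding P_def by (simp add: dot_vmul matrix_vector_mul_assoc[symmetric])
    ultimately show ?thesis unfolding phi_def by simp
  qed
  define y0 where "y0 = matrix_inv P *v z"
  have zP: "z = P *v y0" unfolding y0_def by (simp add: matrix_vector_mul_assoc minv(1)[OF iP])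
  have fy0: "f = y0 \<bullet> (P *v y0)" unfolding fz y0_def[symmetric] zP by (simp add: minv_mv[OF iP] inner_commute)
  show "\<forall>y. phi Sig x (K *v y) \<le> f"
  proof
    fix y
    have nn: "(y - y0) \<bullet> (P *v (y - y0)) \<ge> 0"
      using pd_pos[OF pP, of "y - y0"] by (cases "y - y0 = 0") auto
    have c: "y0 \<bullet> (P *v y) = y \<bullet> (P *v y0)"
      using sym_dot[OF sP, of y0 y] by (simp add: inner_commute)
    have "(y - y0) \<bullet> (P *v (y - y0)) = f - phi Sig x (K *v y)"
      unfolding phiK fy0 zP using c
      by (simp add: matrix_vector_mult_diff_distrib inner_diff_left inner_diff_right algebra_simps)
    then show "phi Sig x (K *v y) \<le> f" using nn by simp
  qed
  show "\<exists>y. f = phi Sig x (K *v y)"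
    by (rule exI[of _ y0]) (simp add: phiK fy0 zP inner_commute)
qed

lemma aD_nz: "aD t \<noteq> 0"
proof
  assume "aD t = 0"
  then have "aD t $ 2 = 0" by simp
  then show False by (simp add: aD_def)
qed

lemma w_aD: "w $ 2 \<noteq> 0 \<Longrightarrow> w = (w $ 2) *\<^sub>R aD (w $ 1 / w $ 2)"
  by (simp add: aD_def vec_eq_iff forall_2)

lemma phi_expand:
  "phi Sig x (u0 + t *\<^sub>R v) = phi Sig x u0
     + t * (2 * (v \<bullet> (matrix_inv Sig *v x)) - u0 \<bullet> (matrix_inv Sig *v v) - v \<bullet> (matrix_inv Sig *v u0))
     - t^2 * (v \<bullet> (matrix_inv Sig *v v))"
  unfolding phi_def
  by (simp add: matrix_vector_right_distrib matrix_vector_mult_scaleR inner_add_left inner_add_right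
      power2_eq_square algebra_simps)

lemma LR_sup:
  fixes x :: "real^(2 \<times> 'k::finite)"
  assumes pS: "pos_def Sig"
  defines "Q \<equiv> matrix_inv (msqrt Sig)"
  shows "(SUP t::real. x \<bullet> (Q *v (projm (Q ** (kronI (aD t) :: real^'k^(2 \<times> 'k))) *v (Q *v x)))) = Sup (Ufull Sig x)"
proof -
  define F where "F t = x \<bullet> (Q *v (projm (Q ** (kronI (aD t) :: real^'k^(2 \<times> 'k))) *v (Q *v x)))" for t
  have injK: "\<And>y. (kronI (aD t) :: real^'k^(2 \<times> 'k)) *v y = 0 \<Longrightarrow> y = 0" for t
    using kronI_inj[OF aD_nz] by blast
  have i: "phi Sig x (kronI (aD t) *v y) \<le> F t" for t y
    using f_var(1)[OF pS injK[of t], where x=x] unfolding F_def Q_def by blast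
  have ii: "F t \<in> Ufull Sig x" for t
  proof -
    obtain y where "F t = phi Sig x (kronI (aD t) *v y)"
      using f_var(2)[OF pS injK[of t], where x=x] unfolding F_def Q_def by blast
    then show ?thesis unfolding Ufull_def by auto
  qed
  have bddU: "bdd_above (Ufull Sig x)"
    unfolding Ufull_def using phi_bound[OF pS] by (intro bdd_aboveI[where M="x \<bullet> (matrix_inv Sig *v x)"]) auto
  have neU: "Ufull Sig x \<noteq> {}" unfolding Ufull_def by simp
  have bddF: "bdd_above (range F)"
    using ii bddU by (metis bdd_above.E bdd_above.I2)
  have le1: "(SUP t. F t) \<le> Sup (Ufull Sig x)"
    by (rule cSUP_least) (auto intro: cSup_upper[OF ii bddU])
  have A: "phi Sig x (kronI w *v y) \<le> (SUP t. F t)" if w2: "w $ 2 \<noteq> 0" for w y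
  proof -
    have "kronI w *v y = kronI (aD (w $ 1 / w $ 2)) *v ((w $ 2) *\<^sub>R y)"
      by (subst w_aD[OF w2]) (simp add: kronI_scale matrix_vector_mult_scaleR scaleR_matrix_vector_assoc)
    then have "phi Sig x (kronI w *v y) \<le> F (w $ 1 / w $ 2)" using i by simp
    also have "\<dots> \<le> (SUP t. F t)" by (rule cSUP_upper[OF UNIV_I bddF])
    finally show ?thesis .
  qed
  have B: "phi Sig x (kronI w *v y) \<le> (SUP t. F t)" for w y
  proof (cases "w $ 2 = 0")
    case False then show ?thesis by (rule A)
  next
    case True
    define tn where "tn n = inverse (real (Suc n))" for n
    let ?u0 = "kronI w *v y" and ?v = "kronI e2 *v y"
    define C1 where "C1 = 2 * (?v \<bullet> (matrix_inv Sig *v x)) - ?u0 \<bullet> (matrix_inv Sig *v ?v) - ?v \<bullet> (matrix_inv Sig *v ?u0)"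
    define C2 where "C2 = ?v \<bullet> (matrix_inv Sig *v ?v)"
    have seq: "phi Sig x (kronI (w + tn n *\<^sub>R e2) *v y) = phi Sig x ?u0 + tn n * C1 - (tn n)^2 * C2" for n
    proof -
      have "kronI (w + tn n *\<^sub>R e2) *v y = ?u0 + tn n *\<^sub>R ?v"
        by (simp add: kronI_add kronI_scale matrix_vector_mult_add_rdistrib scaleR_matrix_vector_assoc)
      then show ?thesis unfolding C1_def C2_def by (simp add: phi_expand)
    qed
    have le: "phi Sig x (kronI (w + tn n *\<^sub>R e2) *v y) \<le> (SUP t. F t)" for n
    proof (rule A)
      have "(w + tn n *\<^sub>R e2) $ 2 = tn n" using True by (simp add: e2_def)
      then show "(w + tn n *\<^sub>R e2) $ 2 \<noteq> 0" unfolding tn_def by simp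
    qed
    have t0: "tn \<longlonglongrightarrow> 0" unfolding tn_def by (rule LIMSEQ_inverse_real_of_nat)
    have "(\<lambda>n. phi Sig x ?u0 + tn n * C1 - (tn n)^2 * C2) \<longlonglongrightarrow> phi Sig x ?u0 + 0 * C1 - 0^2 * C2"
      by (intro tendsto_intros t0)
    then have lim: "(\<lambda>n. phi Sig x (kronI (w + tn n *\<^sub>R e2) *v y)) \<longlonglongrightarrow> phi Sig x ?u0"
      unfolding seq by simp
    show ?thesis by (rule LIMSEQ_le_const2[OF lim]) (use le in blast)
  qed
  have le2: "Sup (Ufull Sig x) \<le> (SUP t. F t)"
    by (rule cSup_least[OF neU]) (auto simp: Ufull_def B)
  show ?thesis using le1 le2 unfolding F_def by simp
qed

lemma LR_red:
  assumes pS: "pos_def Sig"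
  shows "LR R Sig = Sup (Ufull Sig (vecm R)) - Tstat R Sig \<bullet> Tstat R Sig"
  unfolding LR_def LR_sup[OF pS] ..


context
  fixes g1 :: "real^'k^'k" and g2 :: "real^2^2"
  assumes ig1: "invertible g1" and ig2: "invertible g2" and lt: "lower_tri2 g2"
begin

lemma phi_act:
  assumes pS: "pos_def Sig"
  shows "phi (actS g1 g2 Sig) (kron g2 g1 *v x) u = phi Sig x (matrix_inv (kron g2 g1) *v u)"
proof -
  let ?G = "kron g2 g1" and ?Gi = "matrix_inv (kron g2 g1)" and ?S = "matrix_inv Sig"
  have e: "(transpose ?Gi ** ?S ** ?Gi) *v v = transpose ?Gi *v (?S *v (?Gi *v v))" for v
    by (simp only: matrix_vector_mul_assoc matrix_mul_assoc)
  have "u \<bullet> (transpose ?Gi *v w) = (?Gi *v u) \<bullet> w" for w by (rule dot_transpose)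
  then show ?thesis
    unfolding phi_def inv_act[OF ig1 ig2 lt pS] e minv_mv[OF iG[OF ig1 ig2 lt]] by simp
qed

lemma Gi_kron: "matrix_inv (kron g2 g1) *v (kronI w *v y) = kronI (matrix_inv g2 *v w) *v (matrix_inv g1 *v y)"
proof -
  have "matrix_inv (kron g2 g1) *v (kronI w *v y) = (kron (matrix_inv g2) (matrix_inv g1) ** kronI w) *v y"
    by (simp add: kron_invertible(2)[OF ig2 ig1] matrix_vector_mul_assoc)
  also have "\<dots> = kronI (matrix_inv g2 *v w) *v (matrix_inv g1 *v y)"
    by (simp only: kron_kronI matrix_vector_mul_assoc)
  finally show ?thesis .
qed

lemma Ufull_act:
  assumes pS: "pos_def Sig"
  shows "Ufull (actS g1 g2 Sig) (vecm (actR g1 g2 R)) = Ufull Sig (vecm R)"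
proof -
  have pe: "phi (actS g1 g2 Sig) (vecm (actR g1 g2 R)) (kronI w *v y)
      = phi Sig (vecm R) (kronI (matrix_inv g2 *v w) *v (matrix_inv g1 *v y))" for w y
    unfolding vecm_actR[OF ig1 ig2 lt] phi_act[OF pS] Gi_kron ..
  show ?thesis
  proof
    show "Ufull (actS g1 g2 Sig) (vecm (actR g1 g2 R)) \<subseteq> Ufull Sig (vecm R)"
      unfolding Ufull_def pe by auto
    show "Ufull Sig (vecm R) \<subseteq> Ufull (actS g1 g2 Sig) (vecm (actR g1 g2 R))"
    proof
      fix u assume "u \<in> Ufull Sig (vecm R)"
      then obtain w y where u: "u = phi Sig (vecm R) (kronI w *v y)" unfolding Ufull_def by auto
      have "u = phi (actS g1 g2 Sig) (vecm (actR g1 g2 R)) (kronI (g2 *v w) *v (g1 *v y))"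
        unfolding pe u by (simp add: minv_mv ig1 ig2)
      then show "u \<in> Ufull (actS g1 g2 Sig) (vecm (actR g1 g2 R))" unfolding Ufull_def by auto
    qed
  qed
qed

lemma LR_inv:
  assumes pS: "pos_def Sig"
  shows "LR (actR g1 g2 R) (actS g1 g2 Sig) = LR R Sig"
  unfolding LR_red[OF pd_act[OF ig1 ig2 lt pS]] LR_red[OF pS] Ufull_act[OF pS] TT_inv[OF ig1 ig2 lt pS] ..

end

theorem proposition4:
  fixes R0 :: "real^2^'k" and Sig0 :: "real^(2 \<times> 'k)^(2 \<times> 'k)"
    and g1 :: "real^'k^'k" and g2 :: "real^2^2"
  assumes "pos_def Sig0"
    and "invertible g1"
    and "invertible g2" and "lower_tri2 g2"
  shows "AR (actR g1 g2 R0) (actS g1 g2 Sig0) = AR R0 Sig0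
       \<and> LM (actR g1 g2 R0) (actS g1 g2 Sig0) = LM R0 Sig0
       \<and> LR (actR g1 g2 R0) (actS g1 g2 Sig0) = LR R0 Sig0
       \<and> QLR (actR g1 g2 R0) (actS g1 g2 Sig0) = QLR R0 Sig0"
  using AR_inv[OF assms(2,3,4,1)] LM_inv[OF assms(2,3,4,1)] LR_inv[OF assms(2,3,4,1)] QLR_inv[OF assms(2,3,4,1)]
  by blast

end
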